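(* Let $n\ge2$ and $B_n=\langle a,b\mid ba=b^n\rangle$. 1. If $\mathsf d$ denotes the Levenshtein distance, then $\mathsf c_{\mathsf d}(B_n)=n-1$; and $B_n$ is half-factorial if and only if $n=2$. 2. For all $k,m\in\mathbb N_0$, \[\mathsf L(a^kb^m)=k+m-q_{m,n}(n-2)+(n-2)\cdot[0,q_{m,n}],\] where $q_{m,n}=\lfloor m/(n-1)\rfloor$ if $(n-1)\nmid m$; $q_{m,n}=\frac{m}{n-1}-1$ if $(n-1)\mid m$ and $m\neq0$; and $q_{m,n}=0$ if $m=0$.
   Context: $B_n$ is the monoid with generators $a,b$ and single relation $ba=b^n$; it is reduced and atomic with atoms $a,b$, and every element is uniquely $a^kb^m$ ($k,m\in\mathbb N_0$). Factorizations are words in the free monoid $\mathcal F^*(\{a,b\})$; $\pi$ maps a word to the element it represents; $\sim=\{(x,y)\mid\pi(x)=\pi(y)\}$. $\mathsf L(x)=\{|z|:\pi(z)=x\}$ (with $\mathsf L(1)=\{0\}$). The Levenshtein distance between words $z,z'$ is the minimal number of substitutions, deletions or insertions of single letters needed to transform $z$ into $z'$. For $x\in B_n$, the catenary degree $\mathsf c_{\mathsf d}(x)$ is the least $N\in\mathbb N_0\cup\{\infty\}$ such that any two factorizations $z,z'$ of $x$ are connected by a chain $z=z_0,\dots,z_r=z'$ of factorizations of $x$ with $\mathsf d(z_{i-1},z_i)\le N$; $\mathsf c_{\mathsf d}(B_n)=\sup_x\mathsf c_{\mathsf d}(x)$. Half-factorial: $|\mathsf L(x)|=1$ for all $x$.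 Notation: $[u,v]=\{z\in\mathbb Z:u\le z\le v\}$, $d\cdot L=\{dl:l\in L\}$, $m+L=\{m+l:l\in L\}$. *)

theory Defs
  imports Main "HOL-Library.Extended_Nat"
begin

datatype atom = a | b

inductive Bstep :: "nat \<Rightarrow> atom list \<Rightarrow> atom list \<Rightarrow> bool" for n where
  "Bstep n (u @ [b, a] @ v) (u @ replicate n b @ v)"

text \<open>The congruence on the free monoid generated by the relation: two words
  represent the same element of B_n (the relation \<sim>).\<close>
definition Bequiv :: "nat \<Rightarrow> atom list \<Rightarrow> atom list \<Rightarrow> bool" where
  "Bequiv n = (\<lambda>x y. Bstep n x y \<or> Bstep n y x)\<^sup>*\<^sup>*"

definition facts :: "nat \<Rightarrow> atom list \<Rightarrow> atom list set" where
  "facts n w = {z. Bequiv n z w}"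

definition Lset :: "nat \<Rightarrow> atom list \<Rightarrow> nat set" where
  "Lset n w = length ` facts n w"

definition edit1 :: "'x list \<Rightarrow> 'x list \<Rightarrow> bool" where
  "edit1 z z' \<longleftrightarrow> (\<exists>u v x y.
      (z = u @ [x] @ v \<and> z' = u @ [y] @ v) \<or>
      (z = u @ [x] @ v \<and> z' = u @ v) \<or>
      (z = u @ v \<and> z' = u @ [x] @ v))"

definition lev :: "'x list \<Rightarrow> 'x list \<Rightarrow> nat" where
  "lev z z' = (LEAST k. (edit1 ^^ k) z z')"

definition cat_deg :: "('x list \<Rightarrow> 'x list \<Rightarrow> nat) \<Rightarrow> 'x list set \<Rightarrow> enat" where
  "cat_deg d Z = Inf {N :: enat. \<forall>z\<in>Z. \<forall>z'\<in>Z. \<exists>zs. zs \<noteq> [] \<and> hd zs = z \<and> last zs = z' \<and>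
       set zs \<subseteq> Z \<and> (\<forall>i < length zs - 1. enat (d (zs ! i) (zs ! Suc i)) \<le> N)}"

text \<open>Catenary degree of B_n: supremum over all elements (every element is
  represented by some word).\<close>
definition cat_deg_B :: "nat \<Rightarrow> enat" where
  "cat_deg_B n = (SUP w. cat_deg lev (facts n w))"

definition half_factorial_B :: "nat \<Rightarrow> bool" where
  "half_factorial_B n \<longleftrightarrow> (\<forall>w. card (Lset n w) = 1)"

definition qmn :: "nat \<Rightarrow> nat \<Rightarrow> nat" where
  "qmn m n = (if m = 0 then 0
              else if (n - 1) dvd m then m div (n - 1) - 1
              else m div (n - 1))"

end

theory Submission
  imports Defs
begin

fun nf :: "nat \<Rightarrow> atom list \<Rightarrow> nat \<times> nat" where
  "nf n [] = (0, 0)"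
| "nf n (a # w) = (Suc (fst (nf n w)), snd (nf n w))"
| "nf n (b # w) = (0, 1 + count_list w b + (n - 1) * count_list w a)"

lemma len_count: "length w = count_list w a + count_list w b"
  apply (induction w)
   apply simp
  subgoal for x w by (cases x) auto
  done

lemma count_rep[simp]: "count_list (replicate k x) y = (if x = y then k else 0)"
  by (induction k) auto

lemma nf_step:
  assumes "n \<ge> 1"
  shows "nf n (u @ [b, a] @ v) = nf n (u @ replicate n b @ v)"
proof (induction u)
  case Nil
  from assms obtain p where "n = Suc p" by (cases n) auto
  then show ?case by simp
next
  case (Cons x u)
  then show ?case using assms by (cases x) (auto simp: algebra_simps)
qed

lemma Bstep_nf: "Bstep n x y \<Longrightarrow> n \<ge> 1 \<Longrightarrow> nf n x = nf n y"
  by (induction rule: Bstep.induct) (erule nf_step)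

lemma Bequiv_nf: assumes "Bequiv n x y" "n \<ge> 1" shows "nf n x = nf n y"
  using assms(1) unfolding Bequiv_def
  by (induction rule: rtranclp_induct) (use assms(2) Bstep_nf in fastforce)+

lemma Bstep_ctx: "Bstep n x y \<Longrightarrow> Bstep n (p @ x @ s) (p @ y @ s)"
proof (induction rule: Bstep.induct)
  case (1 u v)
  have "Bstep n ((p @ u) @ [b, a] @ (v @ s)) ((p @ u) @ replicate n b @ (v @ s))"
    by (rule Bstep.intros)
  then show ?case by simp
qed

lemma Bequiv_ctx: "Bequiv n x y \<Longrightarrow> Bequiv n (p @ x @ s) (p @ y @ s)"
  unfolding Bequiv_def
proof (induction rule: rtranclp_induct)
  case base then show ?case by simp
next
  case (step y z)
  then show ?case using Bstep_ctx
    by (metis (mono_tags, lifting) rtranclp.rtrancl_into_rtrancl)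
qed

lemma Bequiv_refl: "Bequiv n x x" unfolding Bequiv_def by simp

lemma Bequiv_trans: "Bequiv n x y \<Longrightarrow> Bequiv n y z \<Longrightarrow> Bequiv n x z"
  unfolding Bequiv_def by simp

lemma Bequiv_sym: "Bequiv n x y \<Longrightarrow> Bequiv n y x"
  unfolding Bequiv_def
proof (induction rule: rtranclp_induct)
  case base then show ?case by simp
next
  case (step y z)
  then show ?case by (metis (mono_tags, lifting) converse_rtranclp_into_rtranclp)
qed

lemma Bequiv_bs:
  assumes "n \<ge> 1" and "p \<ge> 1"
  shows "Bequiv n (replicate p b @ w) (replicate (p + count_list w b + (n - 1) * count_list w a) b)"
  using assms(2)
proof (induction w arbitrary: p)
  case Nil then show ?case by (simp add: Bequiv_refl)
next
  case (Cons x w)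
  show ?case
  proof (cases x)
    case a
    obtain q where q: "p = Suc q" using Cons.prems by (cases p) auto
    have "Bstep n (replicate q b @ [b, a] @ w) (replicate q b @ replicate n b @ w)"
      by (rule Bstep.intros)
    moreover have "replicate p b @ a # w = replicate q b @ [b,a] @ w"
      using q by (simp add: replicate_app_Cons_same)
    moreover have "replicate (p + (n - 1)) b @ w = replicate q b @ replicate n b @ w"
      using q assms by (simp add: replicate_add[symmetric])
    ultimately have s: "Bequiv n (replicate p b @ a # w) (replicate (p + (n - 1)) b @ w)"
      unfolding Bequiv_def by (metis (mono_tags, lifting) r_into_rtranclp)
    have h: "Bequiv n (replicate (p + (n - 1)) b @ w)
        (replicate (p + (n - 1) + count_list w b + (n - 1) * count_list w a) b)"
      by (rule Cons.IH) (use Cons.prems in simp)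
    have eq: "p + count_list (a#w) b + (n-1)*count_list (a#w) a = p + (n - 1) + count_list w b + (n - 1) * count_list w a" by simp
    show ?thesis unfolding a eq by (rule Bequiv_trans[OF s h])
  next
    case b
    have h: "Bequiv n (replicate (Suc p) b @ w)
        (replicate (Suc p + count_list w b + (n - 1) * count_list w a) b)"
      by (rule Cons.IH) (use Cons.prems in simp)
    have e: "replicate p b @ b # w = replicate (Suc p) b @ w"
      by (simp add: replicate_app_Cons_same)
    have eq: "p + count_list (b#w) b + (n-1)*count_list (b#w) a = Suc p + count_list w b + (n-1)*count_list w a" by simp
    show ?thesis unfolding b e eq by (rule h)
  qed
qed

definition can :: "nat \<times> nat \<Rightarrow> atom list" where
  "can km = replicate (fst km) a @ replicate (snd km) b"

lemma Bequiv_can: assumes "n \<ge> 1" shows "Bequiv n w (can (nf n w))"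
proof (induction w)
  case Nil then show ?case by (simp add: can_def Bequiv_refl)
next
  case (Cons x w)
  show ?case
  proof (cases x)
    case a
    then show ?thesis using Bequiv_ctx[OF Cons.IH, of "[a]" "[]"] by (simp add: can_def)
  next
    case b
    then show ?thesis using Bequiv_bs[OF assms, of 1 w] by (simp add: can_def)
  qed
qed

lemma Bequiv_iff: assumes "n \<ge> 1" shows "Bequiv n x y \<longleftrightarrow> nf n x = nf n y"
proof
  assume "Bequiv n x y" then show "nf n x = nf n y" by (rule Bequiv_nf[OF _ assms])
next
  assume e: "nf n x = nf n y"
  have "Bequiv n x (can (nf n x))" by (rule Bequiv_can[OF assms])
  moreover have "Bequiv n (can (nf n x)) y" using e Bequiv_can[OF assms, of y] Bequiv_sym by simp
  ultimately show "Bequiv n x y" by (rule Bequiv_trans)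
qed

lemma facts_eq: "n \<ge> 1 \<Longrightarrow> facts n w = {z. nf n z = nf n w}"
  unfolding facts_def by (simp add: Bequiv_iff)

lemma nf_rep_a: "nf n (replicate k a @ w) = (k + fst (nf n w), snd (nf n w))"
  by (induction k) auto

lemma nf_rep_a0: "nf n (replicate k a) = (k, 0)"
  by (induction k) auto

lemma nf_can: "nf n (replicate k a @ replicate m b) = (k, m)"
  by (cases m) (auto simp: nf_rep_a nf_rep_a0)

lemma nf_len: "n \<ge> 2 \<Longrightarrow> nf n z = (k, m) \<Longrightarrow> \<exists>\<alpha>. length z + (n - 2) * \<alpha> = k + m \<and> (m = 0 \<longrightarrow> \<alpha> = 0) \<and> (m > 0 \<longrightarrow> (n - 1) * \<alpha> < m)"
proof (induction z arbitrary: k m)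
  case Nil then show ?case by auto
next
  case (Cons x w)
  show ?case
  proof (cases x)
    case a
    then show ?thesis using Cons.IH[of "fst (nf n w)" "snd (nf n w)"] Cons.prems by auto
  next
    case b
    obtain r where r: "n = Suc (Suc r)" using Cons.prems(1) by (metis add_2_eq_Suc le_Suc_ex)
    then show ?thesis using Cons.prems len_count[of w] b
      by (intro exI[of _ "count_list w a"]) (auto simp: algebra_simps)
  qed
qed


lemma edit1_sym: "edit1 x y \<Longrightarrow> edit1 y x"
  unfolding edit1_def by blast

lemma editk_sym: "(edit1 ^^ k) x y \<Longrightarrow> (edit1 ^^ k) y x"
proof (induction k arbitrary: x y)
  case 0 then show ?case by simp
next
  case (Suc k)
  from Suc.prems obtain z where "(edit1 ^^ k) x z" "edit1 z y" by (rule relpowp_Suc_E)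
  then show ?case using Suc.IH edit1_sym relpowp_Suc_I2 by metis
qed

lemma editk_cons: "(edit1 ^^ k) x y \<Longrightarrow> (edit1 ^^ k) (c # x) (c # y)"
proof (induction k arbitrary: y)
  case 0 then show ?case by simp
next
  case (Suc k)
  from Suc.prems obtain z where z: "(edit1 ^^ k) x z" "edit1 z y" by (rule relpowp_Suc_E)
  have "edit1 (c # z) (c # y)" using z(2) unfolding edit1_def
    by (metis append_Cons)
  then show ?case using Suc.IH[OF z(1)] relpowp_Suc_I by metis
qed

lemma edit_del: "(edit1 ^^ length x) x []"
proof (induction x)
  case Nil then show ?case by simp
next
  case (Cons c x)
  have "edit1 (c # x) x" unfolding edit1_def
    by (rule exI[of _ "[]"], rule exI[of _ x], rule exI[of _ c]) simp
  then show ?case using Cons relpowp_Suc_I2 by fastforce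
qed

lemma edit_ex: "\<exists>k. (edit1 ^^ k) x y"
proof -
  have "(edit1 ^^ (length x + length y)) x y"
    unfolding relpowp_add using edit_del[of x] editk_sym[OF edit_del[of y]] by blast
  then show ?thesis by blast
qed

lemma lev_path: "(edit1 ^^ lev x y) x y"
  unfolding lev_def using edit_ex[of x y] by (rule LeastI_ex)

lemma lev_le: "(edit1 ^^ k) x y \<Longrightarrow> lev x y \<le> k"
  unfolding lev_def by (rule Least_le)

lemma edit1_cb: "edit1 x y \<Longrightarrow> count_list y b \<le> count_list x b + 1 \<and> count_list x b \<le> count_list y b + 1"
  unfolding edit1_def by auto

lemma editk_cb: "(edit1 ^^ k) x y \<Longrightarrow> count_list y b \<le> count_list x b + k \<and> count_list x b \<le> count_list y b + k"
proof (induction k arbitrary: y)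
  case 0 then show ?case by simp
next
  case (Suc k)
  from Suc.prems obtain z where z: "(edit1 ^^ k) x z" "edit1 z y" by (rule relpowp_Suc_E)
  then show ?case using Suc.IH[OF z(1)] edit1_cb[OF z(2)] by simp
qed

lemma edit_repl: "(edit1 ^^ Suc j) (u @ [a] @ v) (u @ replicate (Suc j) b @ v)"
proof (induction j)
  case 0
  have e: "edit1 (u @ [a] @ v) (u @ [b] @ v)" unfolding edit1_def by blast
  have "(edit1 ^^ 0) (u @ [a] @ v) (u @ [a] @ v)" by simp
  from relpowp_Suc_I[OF this e] show ?case by simp
next
  case (Suc j)
  have "edit1 (u @ replicate (Suc j) b @ v) (u @ [b] @ (replicate (Suc j) b @ v))"
    unfolding edit1_def by blast
  then show ?case using Suc relpowp_Suc_I[OF Suc] by simp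
qed

definition S :: "nat \<Rightarrow> atom list \<Rightarrow> atom list \<Rightarrow> bool" where
  "S n x y \<longleftrightarrow> nf n x = nf n y \<and> (\<exists>k \<le> n - 1. (edit1 ^^ k) x y)"

lemma S_sym: "S n x y \<Longrightarrow> S n y x"
  unfolding S_def using editk_sym by metis

lemma S_cons: "(S n)\<^sup>*\<^sup>* x y \<Longrightarrow> (S n)\<^sup>*\<^sup>* (a # x) (a # y)"
proof (induction rule: rtranclp_induct)
  case base then show ?case by simp
next
  case (step y z)
  have "S n (a # y) (a # z)" using step(2) editk_cons unfolding S_def by fastforce
  then show ?case using step(3) by simp
qed

lemma S_bs:
  assumes "n \<ge> 2" "p \<ge> 1"
  shows "(S n)\<^sup>*\<^sup>* (replicate p b @ w) (replicate (p + count_list w b + (n - 1) * count_list w a) b)"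
  using assms(2)
proof (induction w arbitrary: p)
  case Nil then show ?case by simp
next
  case (Cons x w)
  show ?case
  proof (cases x)
    case a
    obtain j where j: "n - 1 = Suc j" using assms(1) by (intro that[of "n-2"]) arith
    have st: "S n (replicate p b @ a # w) (replicate (p + (n - 1)) b @ w)"
      unfolding S_def
    proof
      obtain q where q: "p = Suc q" using Cons.prems by (cases p) auto
      show "nf n (replicate p b @ a # w) = nf n (replicate (p + (n - 1)) b @ w)"
        using q by simp
      have ed: "(edit1 ^^ Suc j) (replicate p b @ [a] @ w) (replicate p b @ replicate (Suc j) b @ w)"
        by (rule edit_repl)
      have eq: "replicate p b @ replicate (Suc j) b @ w = replicate (p + (n-1)) b @ w"
        using j by (simp add: replicate_add replicate_append_same)
      show "\<exists>k\<le>n - 1. (edit1 ^^ k) (replicate p b @ a # w) (replicate (p + (n - 1)) b @ w)"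
        using ed eq j by (metis append.left_neutral append_Cons order_refl)
    qed
    have h: "(S n)\<^sup>*\<^sup>* (replicate (p + (n - 1)) b @ w)
        (replicate (p + (n - 1) + count_list w b + (n - 1) * count_list w a) b)"
      by (rule Cons.IH) (use Cons.prems in simp)
    have eq: "p + count_list (a#w) b + (n-1)*count_list (a#w) a = p + (n - 1) + count_list w b + (n - 1) * count_list w a" by simp
    show ?thesis unfolding a eq by (rule converse_rtranclp_into_rtranclp[OF st h])
  next
    case b
    have h: "(S n)\<^sup>*\<^sup>* (replicate (Suc p) b @ w)
        (replicate (Suc p + count_list w b + (n - 1) * count_list w a) b)"
      by (rule Cons.IH) (use Cons.prems in simp)
    have e: "replicate p b @ b # w = replicate (Suc p) b @ w"
      by (simp add: replicate_app_Cons_same)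
    have eq: "p + count_list (b#w) b + (n-1)*count_list (b#w) a = Suc p + count_list w b + (n-1)*count_list w a" by simp
    show ?thesis unfolding b e eq by (rule h)
  qed
qed

lemma S_can: assumes "n \<ge> 2" shows "(S n)\<^sup>*\<^sup>* w (can (nf n w))"
proof (induction w)
  case Nil then show ?case by (simp add: can_def)
next
  case (Cons x w)
  show ?case
  proof (cases x)
    case a
    then show ?thesis using S_cons[OF Cons.IH] by (simp add: can_def)
  next
    case b
    then show ?thesis using S_bs[OF assms, of 1 w] by (simp add: can_def)
  qed
qed

lemma S_nf: "(S n)\<^sup>*\<^sup>* x y \<Longrightarrow> nf n x = nf n y"
  by (induction rule: rtranclp_induct) (auto simp: S_def)

lemma S_conn: assumes "n \<ge> 2" "nf n x = nf n y" shows "(S n)\<^sup>*\<^sup>* x y"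
proof -
  have "(S n)\<^sup>*\<^sup>* y (can (nf n y))" by (rule S_can[OF assms(1)])
  then have "(S n)\<^sup>*\<^sup>* (can (nf n y)) y"
  proof (induction rule: rtranclp_induct)
    case base then show ?case by simp
  next
    case (step u v)
    then show ?case using S_sym by (metis converse_rtranclp_into_rtranclp)
  qed
  then show ?thesis using S_can[OF assms(1), of x] assms(2) by simp
qed

lemma chain_ex:
  assumes "R\<^sup>*\<^sup>* x y" "P x" "\<And>x y. R x y \<Longrightarrow> P x \<Longrightarrow> P y \<and> dd x y \<le> N"
  shows "\<exists>zs. zs \<noteq> [] \<and> hd zs = x \<and> last zs = y \<and> set zs \<subseteq> {z. P z} \<and>
     (\<forall>i<length zs - 1. dd (zs ! i) (zs ! Suc i) \<le> N)"
  using assms(1,2)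
proof (induction rule: converse_rtranclp_induct)
  case base then show ?case by (intro exI[of _ "[y]"]) simp
next
  case (step u v)
  from assms(3)[OF step(1) step(4)] have py: "P v" and d: "dd u v \<le> N" by auto
  from step(3)[OF py] obtain zs where zs: "zs \<noteq> []" "hd zs = v" "last zs = y" "set zs \<subseteq> {z. P z}"
    "\<forall>i<length zs - 1. dd (zs ! i) (zs ! Suc i) \<le> N" by blast
  show ?case
  proof (intro exI[of _ "u # zs"] conjI)
    show "\<forall>i<length (u # zs) - 1. dd ((u # zs) ! i) ((u # zs) ! Suc i) \<le> N"
    proof (intro allI impI)
      fix i assume "i < length (u # zs) - 1"
      then show "dd ((u # zs) ! i) ((u # zs) ! Suc i) \<le> N"
        using zs d by (cases i) (auto simp: hd_conv_nth)
    qed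
  qed (use zs step(4) in auto)
qed

lemma step_find: "hd zs \<in> A \<Longrightarrow> last zs \<notin> A \<Longrightarrow> zs \<noteq> [] \<Longrightarrow>
   \<exists>i < length zs - 1. zs ! i \<in> A \<and> zs ! Suc i \<notin> A"
proof (induction zs)
  case Nil then show ?case by simp
next
  case (Cons x zs)
  show ?case
  proof (cases "zs = []")
    case True then show ?thesis using Cons by simp
  next
    case False
    show ?thesis
    proof (cases "hd zs \<in> A")
      case True
      from Cons.IH[OF True] Cons.prems False obtain i where "i < length zs - 1" "zs ! i \<in> A" "zs ! Suc i \<notin> A"
        by auto
      then show ?thesis by (intro exI[of _ "Suc i"]) auto
    next
      case f: False
      then show ?thesis using Cons.prems False by (intro exI[of _ 0]) (auto simp: hd_conv_nth)
    qed
  qed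
qed


lemma qmn_eq: assumes "n \<ge> 2" "m > 0" shows "qmn m n = (m - 1) div (n - 1)"
proof -
  define d where "d = n - 1"
  have d: "d > 0" using assms d_def by simp
  show ?thesis
  proof (cases "d dvd m")
    case True
    then obtain c where c: "m = d * c" by blast
    have c1: "c \<ge> 1" using assms(2) c by (cases "c = 0") simp_all
    have e1: "(m - 1) div d = c - 1"
    proof (rule div_nat_eqI)
      have "d * (c - 1) = d * c - d" by (simp add: diff_mult_distrib2)
      then show "d * (c - 1) \<le> m - 1" using c c1 d by linarith
      have "Suc (c - 1) = c" using c1 by simp
      then show "m - 1 < d * Suc (c - 1)" using c assms(2) by simp
    qed
    have e2: "m div d = c" using c d by simp
    have q: "qmn m n = m div d - 1" using True assms(2) by (simp add: qmn_def d_def)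
    show ?thesis unfolding d_def[symmetric] using q e1 e2 by simp
  next
    case False
    have e1: "(m - 1) div d = m div d"
    proof (rule div_nat_eqI)
      have "d * (m div d) \<le> m" by simp
      moreover have "d * (m div d) \<noteq> m" using False by (metis dvd_triv_left)
      ultimately show "d * (m div d) \<le> m - 1" by linarith
      have "m mod d < d" using d by simp
      then have "m < d * Suc (m div d)" using mult_div_mod_eq[of d m] by (simp only: mult_Suc_right)
      then show "m - 1 < d * Suc (m div d)" by simp
    qed
    have q: "qmn m n = m div d" using False assms(2) by (simp add: qmn_def d_def)
    show ?thesis unfolding d_def[symmetric] using q e1 by simp
  qed
qed

lemma qmn_iff: assumes "n \<ge> 2" "m > 0" shows "(n - 1) * \<alpha> < m \<longleftrightarrow> \<alpha> \<le> qmn m n"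
proof -
  have "\<alpha> \<le> qmn m n \<longleftrightarrow> \<alpha> * (n - 1) \<le> m - 1"
    unfolding qmn_eq[OF assms] using assms(1) by (intro less_eq_div_iff_mult_less_eq) simp
  then show ?thesis using assms(2) by (auto simp: mult.commute)
qed

lemma cb_facts: assumes "n \<ge> 2" "nf n z = (0, n)" shows "count_list z b = 1 \<or> count_list z b = n"
proof (cases z)
  case Nil then show ?thesis using assms by simp
next
  case (Cons x w)
  show ?thesis
  proof (cases x)
    case a then show ?thesis using assms Cons by simp
  next
    case b
    have e: "n = 1 + count_list w b + (n - 1) * count_list w a" using assms Cons b by simp
    show ?thesis
    proof (cases "count_list w a = 0")
      case True then show ?thesis using e Cons b by simp
    next
      case False
      then have "(n - 1) * count_list w a \<ge> n - 1" by simp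
      then have "count_list w b = 0" using e assms(1) by linarith
      then show ?thesis using Cons b by simp
    qed
  qed
qed

lemma Lset_eq: "n \<ge> 2 \<Longrightarrow> Lset n w = length ` {z. nf n z = nf n w}"
  unfolding Lset_def by (simp add: facts_eq)

lemma cat_upper: assumes "n \<ge> 2" shows "cat_deg lev (facts n w) \<le> enat (n - 1)"
  unfolding cat_deg_def
proof (rule Inf_lower, safe)
  fix z z' assume z: "z \<in> facts n w" and z': "z' \<in> facts n w"
  have Z: "facts n w = {z. nf n z = nf n w}" using assms by (simp add: facts_eq)
  have "(S n)\<^sup>*\<^sup>* z z'" using S_conn[OF assms] z z' Z by simp
  from chain_ex[OF this, of "\<lambda>z. nf n z = nf n w" "\<lambda>x y. enat (lev x y)" "enat (n - 1)"]
  obtain zs where "zs \<noteq> []" "hd zs = z" "last zs = z'" "set zs \<subseteq> {z. nf n z = nf n w}"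
    "\<forall>i<length zs - 1. enat (lev (zs ! i) (zs ! Suc i)) \<le> enat (n - 1)"
  proof -
    have "\<And>x y. S n x y \<Longrightarrow> nf n x = nf n w \<Longrightarrow> nf n y = nf n w \<and> enat (lev x y) \<le> enat (n - 1)"
      unfolding S_def using lev_le by fastforce
    then show ?thesis using chain_ex[OF \<open>(S n)\<^sup>*\<^sup>* z z'\<close>, of "\<lambda>z. nf n z = nf n w" "\<lambda>x y. enat (lev x y)" "enat (n - 1)"]
      z Z that by blast
  qed
  then show "\<exists>zs. zs \<noteq> [] \<and> hd zs = z \<and> last zs = z' \<and> set zs \<subseteq> facts n w \<and>
            (\<forall>i<length zs - 1. enat (lev (zs ! i) (zs ! Suc i)) \<le> enat (n - 1))"
    using Z by blast
qed

lemma nf_ba: "n \<ge> 2 \<Longrightarrow> nf n [b, a] = (0, n)" by simp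
lemma nf_bn: "n \<ge> 2 \<Longrightarrow> nf n (replicate n b) = (0, n)"
  by (cases n) auto

lemma cat_lower: assumes "n \<ge> 2" shows "enat (n - 1) \<le> cat_deg lev (facts n (replicate n b))"
  unfolding cat_deg_def
proof (rule Inf_greatest, safe)
  fix N
  assume H: "\<forall>z\<in>facts n (replicate n b). \<forall>z'\<in>facts n (replicate n b). \<exists>zs. zs \<noteq> [] \<and> hd zs = z \<and> last zs = z' \<and>
       set zs \<subseteq> facts n (replicate n b) \<and> (\<forall>i<length zs - 1. enat (lev (zs ! i) (zs ! Suc i)) \<le> N)"
  have Z: "facts n (replicate n b) = {z. nf n z = (0, n)}" using assms by (simp add: facts_eq nf_bn)
  have m1: "[b, a] \<in> facts n (replicate n b)"
    using assms unfolding Z by simp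
  have m2: "replicate n b \<in> facts n (replicate n b)"
    unfolding Z using nf_bn[OF assms] by simp
  have "\<exists>zs. zs \<noteq> [] \<and> hd zs = [b, a] \<and> last zs = replicate n b \<and>
       set zs \<subseteq> facts n (replicate n b) \<and> (\<forall>i<length zs - 1. enat (lev (zs ! i) (zs ! Suc i)) \<le> N)"
    using bspec[OF bspec[OF H m1] m2] .
  then obtain zs where zs: "zs \<noteq> []" "hd zs = [b, a]" "last zs = replicate n b"
    "set zs \<subseteq> facts n (replicate n b)" "\<forall>i<length zs - 1. enat (lev (zs ! i) (zs ! Suc i)) \<le> N"
    by blast
  have "\<exists>i < length zs - 1. zs ! i \<in> {z. count_list z b = 1} \<and> zs ! Suc i \<notin> {z. count_list z b = 1}"
  proof (rule step_find)
    show "hd zs \<in> {z. count_list z b = 1}" using zs(2) by simp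
    show "last zs \<notin> {z. count_list z b = 1}" using zs(3) assms by simp
    show "zs \<noteq> []" by (rule zs(1))
  qed
  then obtain i where i: "i < length zs - 1" "count_list (zs ! i) b = 1" "count_list (zs ! Suc i) b \<noteq> 1"
    by auto
  have "zs ! Suc i \<in> set zs" using i(1) by simp
  then have "nf n (zs ! Suc i) = (0, n)" using zs(4) Z by auto
  then have c2: "count_list (zs ! Suc i) b = n" using cb_facts[OF assms] i(3) by blast
  have "count_list (zs ! Suc i) b \<le> count_list (zs ! i) b + lev (zs ! i) (zs ! Suc i)"
    using editk_cb[OF lev_path] by blast
  then have "n - 1 \<le> lev (zs ! i) (zs ! Suc i)" using c2 i(2) by simp
  moreover have "enat (lev (zs ! i) (zs ! Suc i)) \<le> N" using zs(5) i(1) by blast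
  ultimately show "enat (n - 1) \<le> N" by (meson enat_ord_simps(1) order_trans)
qed

lemma cat_B: assumes "n \<ge> 2" shows "cat_deg_B n = enat (n - 1)"
  unfolding cat_deg_B_def
proof (rule antisym)
  show "(SUP w. cat_deg lev (facts n w)) \<le> enat (n - 1)"
    by (rule SUP_least) (rule cat_upper[OF assms])
  show "enat (n - 1) \<le> (SUP w. cat_deg lev (facts n w))"
    using cat_lower[OF assms] by (meson UNIV_I SUP_upper order_trans)
qed

lemma hf: assumes "n \<ge> 2" shows "half_factorial_B n \<longleftrightarrow> n = 2"
proof
  assume h: "half_factorial_B n"
  then have "card (Lset n (replicate n b)) = 1" unfolding half_factorial_B_def by blast
  then obtain x where x: "Lset n (replicate n b) = {x}" by (rule card_1_singletonE)
  have e1: "nf n [b, a] = nf n (replicate n b)" using nf_bn[OF assms] assms by simp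
  have "length [b, a] \<in> Lset n (replicate n b)"
    unfolding Lset_eq[OF assms] by (rule imageI) (use e1 in simp)
  moreover have "length (replicate n b) \<in> Lset n (replicate n b)"
    unfolding Lset_eq[OF assms] by (rule imageI) simp
  ultimately show "n = 2" using x by simp
next
  assume n2: "n = 2"
  show "half_factorial_B n" unfolding half_factorial_B_def
  proof
    fix w
    have L: "length z = fst (nf n w) + snd (nf n w)" if "nf n z = nf n w" for z
    proof -
      have "nf n z = (fst (nf n w), snd (nf n w))" using that by simp
      from nf_len[OF assms this] obtain \<alpha> where "length z + (n - 2) * \<alpha> = fst (nf n w) + snd (nf n w)"
        by blast
      then show ?thesis using n2 by simp
    qed
    have "Lset n w = {fst (nf n w) + snd (nf n w)}"
    proof
      show "Lset n w \<subseteq> {fst (nf n w) + snd (nf n w)}"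
        unfolding Lset_eq[OF assms] using L by blast
      have "length w \<in> Lset n w" unfolding Lset_eq[OF assms] by (rule imageI) simp
      then show "{fst (nf n w) + snd (nf n w)} \<subseteq> Lset n w" using L[of w] by simp
    qed
    then show "card (Lset n w) = 1" by simp
  qed
qed

lemma Lset_can: assumes "n \<ge> 2"
  shows "int ` Lset n (replicate k a @ replicate m b) =
    {int (k + m) - int (qmn m n) * (int n - 2) + (int n - 2) * j | j. 0 \<le> j \<and> j \<le> int (qmn m n)}"
proof -
  define q where "q = qmn m n"
  have n2: "int n - 2 = int (n - 2)" using assms by simp
  have PP: "(n - 2) * \<alpha> + \<alpha> = (n - 1) * \<alpha>" for \<alpha>
  proof -
    obtain r where "n = Suc (Suc r)" using assms by (metis add_2_eq_Suc le_Suc_ex)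
    then show ?thesis by simp
  qed
  have LL: "Lset n (replicate k a @ replicate m b) = length ` {z. nf n z = (k, m)}"
    unfolding Lset_eq[OF assms] nf_can ..
  show ?thesis unfolding q_def[symmetric]
  proof (intro equalityI subsetI)
    fix x assume "x \<in> int ` Lset n (replicate k a @ replicate m b)"
    then obtain z where z: "nf n z = (k, m)" "x = int (length z)" unfolding LL by auto
    from nf_len[OF assms z(1)] obtain \<alpha> where al: "length z + (n - 2) * \<alpha> = k + m"
      "m = 0 \<longrightarrow> \<alpha> = 0" "0 < m \<longrightarrow> (n - 1) * \<alpha> < m" by blast
    have aq: "\<alpha> \<le> q"
    proof (cases "m = 0")
      case True then show ?thesis using al(2) by simp
    next
      case False then show ?thesis using al(3) qmn_iff[OF assms, of m \<alpha>] q_def by simp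
    qed
    have i1: "int (length z) + int (n - 2) * int \<alpha> = int (k + m)"
      using al(1) by (metis of_nat_add of_nat_mult)
    have i2: "int (k + m) - int q * int (n - 2) + int (n - 2) * (int q - int \<alpha>) = int (k + m) - int (n - 2) * int \<alpha>"
      by (simp add: algebra_simps)
    show "x \<in> {int (k + m) - int q * (int n - 2) + (int n - 2) * j | j. 0 \<le> j \<and> j \<le> int q}"
      unfolding n2 using i1 i2 aq z(2)
      by (intro CollectI exI[of _ "int q - int \<alpha>"]) simp
  next
    fix x assume "x \<in> {int (k + m) - int q * (int n - 2) + (int n - 2) * j | j. 0 \<le> j \<and> j \<le> int q}"
    then obtain j where j: "x = int (k + m) - int q * (int n - 2) + (int n - 2) * j" "0 \<le> j" "j \<le> int q"
      by blast
    show "x \<in> int ` Lset n (replicate k a @ replicate m b)"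
    proof (cases "m = 0")
      case True
      then have "q = 0" unfolding q_def qmn_def by simp
      then have "x = int k" using j True by simp
      moreover have "replicate k a \<in> {z. nf n z = (k, m)}" using True nf_rep_a0 by simp
      ultimately show ?thesis unfolding LL by (metis image_eqI length_replicate)
    next
      case False
      define \<alpha> where "\<alpha> = q - nat j"
      have ai: "int \<alpha> = int q - j" using j unfolding \<alpha>_def by simp
      have "\<alpha> \<le> q" unfolding \<alpha>_def by simp
      then have lt: "(n - 1) * \<alpha> < m" using qmn_iff[OF assms, of m \<alpha>] False q_def by simp
      define z where "z = replicate k a @ b # replicate \<alpha> a @ replicate (m - 1 - (n - 1) * \<alpha>) b"
      have "nf n z = (k, 1 + (m - 1 - (n - 1) * \<alpha>) + (n - 1) * \<alpha>)"
        unfolding z_def nf_rep_a by simp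
      also have "\<dots> = (k, m)" using lt by simp
      finally have zf: "nf n z = (k, m)" .
      have lz: "length z = k + 1 + \<alpha> + (m - 1 - (n - 1) * \<alpha>)" unfolding z_def by simp
      have "length z + (n - 2) * \<alpha> = k + m" using lz lt PP[of \<alpha>] by linarith
      then have i1: "int (length z) + int (n - 2) * int \<alpha> = int (k + m)"
        by (metis of_nat_add of_nat_mult)
      have i2: "int (k + m) - int q * int (n - 2) + int (n - 2) * (int q - int \<alpha>) = int (k + m) - int (n - 2) * int \<alpha>"
        by (simp add: algebra_simps)
      have "x = int (length z)" using j(1) i1 i2 ai unfolding n2 by simp
      then show ?thesis unfolding LL using zf by blast
    qed
  qed
qed

theorem theorem4p1:
  fixes n :: nat
  assumes "n \<ge> 2"
  shows "cat_deg_B n = enat (n - 1) \<and>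
         (half_factorial_B n \<longleftrightarrow> n = 2) \<and>
         (\<forall>k m. int ` Lset n (replicate k a @ replicate m b) =
           {int (k + m) - int (qmn m n) * (int n - 2) + (int n - 2) * j | j. 0 \<le> j \<and> j \<le> int (qmn m n)})"
  using cat_B[OF assms] hf[OF assms] Lset_can[OF assms] by blast

end
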